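(* Let $N\ge 0$. Given infinite vectors $U_1,\dots,U_{N+1}$ and $I$ with entries in $M$, there exist unique infinite vectors $U'_1,\dots,U'_{N+1}$ and $I'$ with entries in $M$ such that $$F_{N+1}(U'_{N+1})\cdots F_2(U'_2)F_1(U'_1)E(I)=E(I')F_{N+1}(U_{N+1})\cdots F_2(U_2)F_1(U_1).$$ Moreover, the resulting map $(U_i,I)\mapsto(U'_i,I')$ is expressed by subtraction-free rational expressions (terms built from $+,\cdot,{}^{-1},1$).
   Context: $M$ is the semifield of germs at $\epsilon=0$ of continuous positive functions $f(\epsilon)$, $\epsilon>0$, with $\lim_{\epsilon\to+0}\epsilon\log f(\epsilon)\in\mathbb{R}$, with usual addition, multiplication and multiplicative inverse. For an infinite vector $I=(I_1,I_2,\dots)$, $E(I)$ is the infinite upper bidiagonal matrix with $I_1,I_2,\dots$ on the diagonal and $1$ on the superdiagonal. For an infinite vector $V=(V_1,V_2,\dots)$, $F(V)$ is the infinite lower bidiagonal matrix with $1$ on the diagonal and $-V_1,-V_2,\dots$ on the subdiagonal, and $F_k(V)=\mathrm{diag}(\mathrm{Id}_{k-1},F(V))$. *)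

theory Defs
  imports "HOL-Analysis.Analysis"
begin

text \<open>Elements of the semifield M are represented by functions real => real,
  read as germs at 0 from the right (epsilon > 0).\<close>

definition inM :: "(real \<Rightarrow> real) \<Rightarrow> bool" where
  "inM f \<longleftrightarrow> (\<exists>\<delta>>0. continuous_on {0<..<\<delta>} f \<and> (\<forall>e\<in>{0<..<\<delta>}. 0 < f e)
      \<and> (\<exists>L::real. ((\<lambda>e. e * ln (f e)) \<longlongrightarrow> L) (at_right 0)))"

definition germ_eq :: "(real \<Rightarrow> real) \<Rightarrow> (real \<Rightarrow> real) \<Rightarrow> bool" where
  "germ_eq f g \<longleftrightarrow> (\<forall>\<^sub>F e in at_right 0. f e = g e)"

type_synonym imat = "nat \<Rightarrow> nat \<Rightarrow> real"

definition imult :: "imat \<Rightarrow> imat \<Rightarrow> imat" where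
  "imult A B = (\<lambda>i j. \<Sum>k\<in>{k. A i k \<noteq> 0}. A i k * B k j)"

definition iId :: imat where
  "iId = (\<lambda>i j. if i = j then 1 else 0)"

text \<open>E(I): I on the diagonal, 1 on the superdiagonal. Vector entry I 0 is I_1.\<close>
definition Emat :: "(nat \<Rightarrow> real) \<Rightarrow> imat" where
  "Emat I = (\<lambda>i j. if j = i then I i else if j = Suc i then 1 else 0)"

definition Fmat :: "(nat \<Rightarrow> real) \<Rightarrow> imat" where
  "Fmat V = (\<lambda>i j. if i = j then 1 else if i = Suc j then - V j else 0)"

text \<open>F_k(V) = diag(Id_{k-1}, F(V)) for k >= 1.\<close>
definition Fkmat :: "nat \<Rightarrow> (nat \<Rightarrow> real) \<Rightarrow> imat" where
  "Fkmat k V = (\<lambda>i j. if i < k - 1 \<or> j < k - 1 then (if i = j then 1 else 0)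
                       else Fmat V (i - (k - 1)) (j - (k - 1)))"

fun prodF :: "(nat \<Rightarrow> nat \<Rightarrow> real) \<Rightarrow> nat \<Rightarrow> imat" where
  "prodF U 0 = iId"
| "prodF U (Suc n) = imult (Fkmat (Suc n) (U (Suc n))) (prodF U n)"

definition rel_eq :: "nat \<Rightarrow> (nat \<Rightarrow> nat \<Rightarrow> real \<Rightarrow> real) \<Rightarrow> (nat \<Rightarrow> real \<Rightarrow> real)
   \<Rightarrow> (nat \<Rightarrow> nat \<Rightarrow> real \<Rightarrow> real) \<Rightarrow> (nat \<Rightarrow> real \<Rightarrow> real) \<Rightarrow> bool" where
  "rel_eq N U I U' I' \<longleftrightarrow>
     (\<forall>i j. \<forall>\<^sub>F e in at_right 0.
        imult (prodF (\<lambda>k m. U' k m e) (Suc N)) (Emat (\<lambda>m. I m e)) i j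
      = imult (Emat (\<lambda>m. I' m e)) (prodF (\<lambda>k m. U k m e) (Suc N)) i j)"

text \<open>Subtraction-free rational expressions in variables: UV k i stands for the
  i-th entry of U_k, IV i for the i-th entry of I.\<close>
datatype var = UV nat nat | IV nat

datatype sfexpr = SVar var | SOne | SAdd sfexpr sfexpr | SMul sfexpr sfexpr | SInv sfexpr

fun sf_eval :: "(var \<Rightarrow> real \<Rightarrow> real) \<Rightarrow> sfexpr \<Rightarrow> real \<Rightarrow> real" where
  "sf_eval \<rho> (SVar v) = \<rho> v"
| "sf_eval \<rho> SOne = (\<lambda>e. 1)"
| "sf_eval \<rho> (SAdd a b) = (\<lambda>e. sf_eval \<rho> a e + sf_eval \<rho> b e)"
| "sf_eval \<rho> (SMul a b) = (\<lambda>e. sf_eval \<rho> a e * sf_eval \<rho> b e)"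
| "sf_eval \<rho> (SInv a) = (\<lambda>e. inverse (sf_eval \<rho> a e))"

definition inp :: "(nat \<Rightarrow> nat \<Rightarrow> real \<Rightarrow> real) \<Rightarrow> (nat \<Rightarrow> real \<Rightarrow> real) \<Rightarrow> var \<Rightarrow> real \<Rightarrow> real" where
  "inp U I v = (case v of UV k i \<Rightarrow> U k i | IV i \<Rightarrow> I i)"

end

theory Submission
  imports Defs
begin


definition lowb :: "nat \<Rightarrow> imat \<Rightarrow> bool" where
  "lowb d A \<longleftrightarrow> (\<forall>i k. A i k \<noteq> 0 \<longrightarrow> k \<le> i + d)"

definition rows_eq :: "nat \<Rightarrow> imat \<Rightarrow> imat \<Rightarrow> bool" where
  "rows_eq n A B \<longleftrightarrow> (\<forall>i<n. \<forall>j. A i j = B i j)"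

definition lu :: "imat \<Rightarrow> bool" where
  "lu A \<longleftrightarrow> (\<forall>i. A i i = 1) \<and> (\<forall>i j. i < j \<longrightarrow> A i j = 0)"

lemma imult_eq:
  assumes "finite {k. A i k \<noteq> 0}" "finite T"
    "\<And>k. A i k \<noteq> 0 \<Longrightarrow> B k j \<noteq> 0 \<Longrightarrow> k \<in> T"
  shows "imult A B i j = (\<Sum>k\<in>T. A i k * B k j)"
proof -
  let ?S = "{k. A i k \<noteq> 0}"
  have "imult A B i j = (\<Sum>k\<in>?S \<union> T. A i k * B k j)"
    unfolding imult_def by (rule sum.mono_neutral_left) (use assms in auto)
  also have "\<dots> = (\<Sum>k\<in>T. A i k * B k j)"
    by (rule sum.mono_neutral_right) (use assms in auto)
  finally show ?thesis .
qed

lemma lowb_finite: "lowb d A \<Longrightarrow> finite {k. A i k \<noteq> 0}"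
  unfolding lowb_def by (rule finite_subset[of _ "{..i+d}"]) auto

lemma imult_lowb: "lowb d A \<Longrightarrow> imult A B i j = (\<Sum>k\<le>i+d. A i k * B k j)"
  by (rule imult_eq) (auto simp: lowb_finite lowb_def)

lemma lowb_mono: "lowb d A \<Longrightarrow> d \<le> d' \<Longrightarrow> lowb d' A"
  unfolding lowb_def by force

lemma lowb_imult:
  assumes "lowb d1 A" "lowb d2 B" shows "lowb (d1 + d2) (imult A B)"
  unfolding lowb_def
proof (intro allI impI)
  fix i k assume "imult A B i k \<noteq> 0"
  then obtain l where "l \<le> i + d1" "A i l \<noteq> 0" "B l k \<noteq> 0"
    unfolding imult_lowb[OF assms(1)] by (metis (mono_tags, lifting) atMost_iff mult_eq_0_iff sum.neutral)
  with assms(2) show "k \<le> i + (d1 + d2)" unfolding lowb_def by fastforce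
qed

lemma imult_assoc:
  assumes A: "lowb d1 A" and B: "lowb d2 B"
  shows "imult (imult A B) C = imult A (imult B C)"
proof (intro ext)
  fix i j
  have AB: "lowb (d1+d2) (imult A B)" by (rule lowb_imult[OF A B])
  have "imult (imult A B) C i j = (\<Sum>l\<le>i+(d1+d2). (\<Sum>k\<le>i+d1. A i k * B k l) * C l j)"
    unfolding imult_lowb[OF AB] imult_lowb[OF A] ..
  also have "\<dots> = (\<Sum>k\<le>i+d1. A i k * (\<Sum>l\<le>i+(d1+d2). B k l * C l j))"
    by (simp add: sum_distrib_left sum_distrib_right mult.assoc sum.swap[of _ "{..i+(d1+d2)}"])
  also have "\<dots> = (\<Sum>k\<le>i+d1. A i k * imult B C k j)"
  proof (rule sum.cong[OF refl])
    fix k assume k: "k \<in> {..i+d1}"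
    have "(\<Sum>l\<le>i+(d1+d2). B k l * C l j) = (\<Sum>l\<le>k+d2. B k l * C l j)"
      by (rule sum.mono_neutral_right) (use k B in \<open>auto simp: lowb_def\<close>)
    then show "A i k * (\<Sum>l\<le>i+(d1+d2). B k l * C l j) = A i k * imult B C k j"
      by (simp add: imult_lowb[OF B])
  qed
  also have "\<dots> = imult A (imult B C) i j" by (simp add: imult_lowb[OF A])
  finally show "imult (imult A B) C i j = imult A (imult B C) i j" .
qed

lemma rows_eq_imult:
  assumes "lowb d A" "lowb d A'" "rows_eq n A A'" "rows_eq (n+d) B B'"
  shows "rows_eq n (imult A B) (imult A' B')"
  unfolding rows_eq_def
proof (intro allI impI)
  fix i j assume i: "i < n"
  show "imult A B i j = imult A' B' i j"
    unfolding imult_lowb[OF assms(1)] imult_lowb[OF assms(2)]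
    by (rule sum.cong) (use i assms(3,4) in \<open>auto simp: rows_eq_def\<close>)
qed

lemma rows_eq_sym: "rows_eq n A B \<Longrightarrow> rows_eq n B A" by (simp add: rows_eq_def)
lemma rows_eq_trans: "rows_eq n A B \<Longrightarrow> rows_eq n B C \<Longrightarrow> rows_eq n A C" by (simp add: rows_eq_def)
lemma rows_eq_refl: "rows_eq n A A" by (simp add: rows_eq_def)

lemma lu_lowb: "lu A \<Longrightarrow> lowb 0 A"
  unfolding lu_def lowb_def by (metis add_0_right not_le)

lemma lu_imult: assumes "lu A" "lu B" shows "lu (imult A B)"
proof -
  have A: "lowb 0 A" by (rule lu_lowb[OF assms(1)])
  have "imult A B i j = 0" if "i < j" for i j
    unfolding imult_lowb[OF A] by (rule sum.neutral) (use that assms in \<open>auto simp: lu_def\<close>)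
  moreover have "imult A B i i = 1" for i
  proof -
    have "imult A B i i = (\<Sum>k\<in>{i}. A i k * B k i)"
      unfolding imult_lowb[OF A] by (rule sum.mono_neutral_right) (use assms in \<open>auto simp: lu_def\<close>)
    then show ?thesis using assms by (simp add: lu_def)
  qed
  ultimately show ?thesis by (simp add: lu_def)
qed

lemma iId_lu: "lu iId" by (simp add: lu_def iId_def)

lemma imult_iId_left: "imult iId B = B"
proof (intro ext)
  fix i j show "imult iId B i j = B i j"
    by (subst imult_eq[where T="{i}"]) (auto simp: iId_def split: if_splits)
qed

lemma lu_right_cancel:
  assumes X: "lowb d X" and Y: "lowb d Y" and P: "lu P"
    and h: "rows_eq n (imult X P) (imult Y P)"
  shows "rows_eq n X Y"
  unfolding rows_eq_def
proof (intro allI impI, rule ccontr)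
  fix i j assume i: "i < n" and ne: "X i j \<noteq> Y i j"
  let ?D = "{k. X i k \<noteq> Y i k}"
  have fin: "finite ?D"
  proof (rule finite_subset[of _ "{..i+d}"])
    show "?D \<subseteq> {..i+d}"
    proof
      fix k assume "k \<in> ?D"
      then have "X i k \<noteq> 0 \<or> Y i k \<noteq> 0" by auto
      then show "k \<in> {..i+d}" using X Y unfolding lowb_def by auto
    qed
  qed simp
  have ne2: "?D \<noteq> {}" using ne by auto
  define m where "m = Max ?D"
  have mD: "m \<in> ?D" unfolding m_def using fin ne2 by (rule Max_in)
  have mmax: "k \<in> ?D \<Longrightarrow> k \<le> m" for k unfolding m_def using fin by simp
  have mle: "m \<le> i + d"
  proof -
    have "X i m \<noteq> 0 \<or> Y i m \<noteq> 0" using mD by auto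
    then show ?thesis using X Y unfolding lowb_def by auto
  qed
  have "imult X P i m - imult Y P i m = (\<Sum>k\<le>i+d. (X i k - Y i k) * P k m)"
    unfolding imult_lowb[OF X] imult_lowb[OF Y] by (simp add: sum_subtractf left_diff_distrib)
  also have "\<dots> = (\<Sum>k\<in>{m}. (X i k - Y i k) * P k m)"
  proof (rule sum.mono_neutral_right)
    show "\<forall>k\<in>{..i + d} - {m}. (X i k - Y i k) * P k m = 0"
    proof
      fix k assume k: "k \<in> {..i + d} - {m}"
      show "(X i k - Y i k) * P k m = 0"
      proof (cases "k < m")
        case True then show ?thesis using P by (simp add: lu_def)
      next
        case False then have "k \<notin> ?D" using mmax k by force
        then show ?thesis by simp
      qed
    qed
  qed (use mle in auto)
  also have "\<dots> = X i m - Y i m" using P by (simp add: lu_def)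
  finally have "X i m - Y i m = 0" using h i unfolding rows_eq_def by simp
  then show False using mD by simp
qed



lemma lowb_Emat: "lowb 1 (Emat J)"
  unfolding lowb_def Emat_def by auto

lemma imult_Emat_left: "imult (Emat J) B i j = J i * B i j + B (Suc i) j"
proof -
  have "imult (Emat J) B i j = (\<Sum>k\<in>{i, Suc i}. Emat J i k * B k j)"
    by (rule imult_eq[of "Emat J" i, OF lowb_finite[OF lowb_Emat]]) (auto simp: Emat_def split: if_splits)
  then show ?thesis by (simp add: Emat_def)
qed

lemma imult_Emat_right:
  assumes "finite {k. A i k \<noteq> 0}"
  shows "imult A (Emat J) i j = A i j * J j + (if 0 < j then A i (j - 1) else 0)"
proof (cases j)
  case 0
  have "imult A (Emat J) i j = (\<Sum>k\<in>{0}. A i k * Emat J k j)"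
    by (rule imult_eq) (use assms 0 in \<open>auto simp: Emat_def split: if_splits\<close>)
  then show ?thesis using 0 by (simp add: Emat_def)
next
  case (Suc j')
  have "imult A (Emat J) i j = (\<Sum>k\<in>{j', j}. A i k * Emat J k j)"
    by (rule imult_eq) (use assms Suc in \<open>auto simp: Emat_def split: if_splits\<close>)
  then show ?thesis using Suc by (simp add: Emat_def)
qed

lemma Fk_entry:
  "Fkmat (Suc m) V i k = (if k = i then 1 else if Suc m \<le> i \<and> k = i - 1 then - V (i - Suc m) else 0)"
  unfolding Fkmat_def Fmat_def by auto

lemma lu_Fk: "lu (Fkmat (Suc m) V)"
  unfolding lu_def Fk_entry by auto

lemma imult_Fk_left:
  "imult (Fkmat (Suc m) V) B i j = B i j - (if Suc m \<le> i then V (i - Suc m) * B (i - 1) j else 0)"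
proof (cases "Suc m \<le> i")
  case True
  have "imult (Fkmat (Suc m) V) B i j = (\<Sum>k\<in>{i - 1, i}. Fkmat (Suc m) V i k * B k j)"
    by (rule imult_eq[of "Fkmat (Suc m) V" i, OF lowb_finite[OF lu_lowb[OF lu_Fk]]]) (auto simp: Fk_entry split: if_splits)
  moreover have "i - 1 \<noteq> i" using True by simp
  ultimately show ?thesis using True by (simp add: Fk_entry)
next
  case False
  have "imult (Fkmat (Suc m) V) B i j = (\<Sum>k\<in>{i}. Fkmat (Suc m) V i k * B k j)"
    by (rule imult_eq[of "Fkmat (Suc m) V" i, OF lowb_finite[OF lu_lowb[OF lu_Fk]]]) (use False in \<open>auto simp: Fk_entry split: if_splits\<close>)
  then show ?thesis using False by (simp add: Fk_entry)
qed

lemma prodF_lu: "lu (prodF a m)"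
  by (induction m) (auto intro: lu_imult lu_Fk simp: iId_lu)

lemma prodF_rec:
  "prodF a (Suc m) i j = prodF a m i j - (if Suc m \<le> i then a (Suc m) (i - Suc m) * prodF a m (i - 1) j else 0)"
  by (simp add: imult_Fk_left)

lemma prodF_band: "j + m < i \<Longrightarrow> prodF a m i j = 0"
proof (induction m arbitrary: i)
  case 0 then show ?case by (simp add: iId_def)
next
  case (Suc m)
  then show ?case unfolding prodF_rec by simp
qed

lemma prodF_lowest:
  "m \<le> i \<Longrightarrow> (\<forall>k\<in>{1..m}. a k (i - m) \<noteq> 0) \<Longrightarrow> prodF a m i (i - m) \<noteq> 0"
proof (induction m arbitrary: i)
  case 0 then show ?case by (simp add: iId_def)
next
  case (Suc m)
  have b: "prodF a m i (i - Suc m) = 0" by (rule prodF_band) (use Suc.prems in auto)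
  have "prodF a m (i - 1) (i - 1 - m) \<noteq> 0"
    by (rule Suc.IH) (use Suc.prems in auto)
  moreover have "i - 1 - m = i - Suc m" by simp
  moreover have "a (Suc m) (i - Suc m) \<noteq> 0" using Suc.prems by auto
  ultimately show ?case using Suc.prems b unfolding prodF_rec by simp
qed

lemma imult_iId_right: "imult A iId = A" if "lowb d A"
proof (intro ext)
  fix i j show "imult A iId i j = A i j"
    using imult_eq[of A i "{j}" iId j, OF lowb_finite[OF that]] by (auto simp: iId_def split: if_splits)
qed

function linv :: "imat \<Rightarrow> nat \<Rightarrow> nat \<Rightarrow> real" where
  "linv A i j = (if i < j then 0 else if i = j then 1
      else - (\<Sum>k\<in>{j<..i}. linv A i k * A k j))"
  by pat_completeness auto
termination by (relation "Wellfounded.measure (\<lambda>(A, i, j). i - j)") auto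

declare linv.simps[simp del]

lemma linv_lu: "lu (linv A)"
  unfolding lu_def by (auto simp: linv.simps)

lemma linv_left:
  assumes "lu A" shows "imult (linv A) A = iId"
proof (intro ext)
  fix i j
  have L: "lowb 0 (linv A)" by (rule lu_lowb[OF linv_lu])
  have s: "imult (linv A) A i j = (\<Sum>k\<le>i. linv A i k * A k j)"
    using imult_lowb[OF L] by simp
  show "imult (linv A) A i j = iId i j"
  proof (cases "j \<le> i")
    case False
    then show ?thesis unfolding s using assms by (auto simp: lu_def iId_def intro!: sum.neutral)
  next
    case True
    have split: "{..i} = {..<j} \<union> ({j} \<union> {j<..i})" using True by auto
    have z: "(\<Sum>k<j. linv A i k * A k j) = 0" using assms by (auto simp: lu_def intro!: sum.neutral)
    have "imult (linv A) A i j = linv A i j + (\<Sum>k\<in>{j<..i}. linv A i k * A k j)"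
      unfolding s split using assms z
      by (subst sum.union_disjoint, auto simp: lu_def)+
    also have "\<dots> = iId i j"
    proof (cases "j = i")
      case True then show ?thesis by (simp add: linv.simps iId_def)
    next
      case False then show ?thesis using \<open>j \<le> i\<close>
        by (subst linv.simps) (simp add: iId_def)
    qed
    finally show ?thesis .
  qed
qed



lemma fact_uniq:
  assumes "rows_eq n (prodF a m) (prodF b m)" "\<forall>k\<in>{1..m}. \<forall>t<n. a k t \<noteq> 0"
  shows "\<forall>k t. k \<in> {1..m} \<and> t + k < n \<longrightarrow> a k t = b k t"
  using assms
proof (induction m)
  case 0 then show ?case by simp
next
  case (Suc m)
  have rows: "(\<forall>j. prodF a m i j = prodF b m i j) \<and>
      (Suc m \<le> i \<longrightarrow> a (Suc m) (i - Suc m) = b (Suc m) (i - Suc m))" if "i < n" for i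
    using that
  proof (induction i rule: less_induct)
    case (less i)
    have eqS: "prodF a (Suc m) i j = prodF b (Suc m) i j" for j
      using Suc.prems(1) less.prems unfolding rows_eq_def by blast
    show ?case
    proof (cases "Suc m \<le> i")
      case False
      then show ?thesis using eqS unfolding prodF_rec by simp
    next
      case True
      have R: "prodF a m (i - 1) j = prodF b m (i - 1) j" for j
        using less.IH[of "i - 1"] less.prems True by auto
      have bandA: "prodF a m i (i - Suc m) = 0" by (rule prodF_band) (use True in auto)
      have bandB: "prodF b m i (i - Suc m) = 0" by (rule prodF_band) (use True in auto)
      have low: "prodF a m (i - 1) (i - 1 - m) \<noteq> 0"
        by (rule prodF_lowest) (use True Suc.prems(2) less.prems in auto)
      have idx: "i - 1 - m = i - Suc m" by simp
      have "a (Suc m) (i - Suc m) * prodF a m (i - 1) (i - Suc m)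
          = b (Suc m) (i - Suc m) * prodF a m (i - 1) (i - Suc m)"
        using eqS[of "i - Suc m"] True bandA bandB R unfolding prodF_rec by simp
      then have ab: "a (Suc m) (i - Suc m) = b (Suc m) (i - Suc m)"
        using low idx by simp
      have "prodF a m i j = prodF b m i j" for j
        using eqS[of j] True ab R unfolding prodF_rec by simp
      then show ?thesis using ab by simp
    qed
  qed
  have "rows_eq n (prodF a m) (prodF b m)" using rows unfolding rows_eq_def by blast
  then have IH: "\<forall>k t. k \<in> {1..m} \<and> t + k < n \<longrightarrow> a k t = b k t"
    using Suc.IH Suc.prems(2) by auto
  show ?case
  proof (intro allI impI)
    fix k t assume kt: "k \<in> {1..Suc m} \<and> t + k < n"
    show "a k t = b k t"
    proof (cases "k = Suc m")
      case True
      have "Suc m \<le> t + Suc m" by simp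
      then show ?thesis using rows[of "t + Suc m"] kt True by simp
    next
      case False then show ?thesis using IH kt by auto
    qed
  qed
qed

lemma lu_uniq:
  assumes Pa: "lu Pa" and Pb: "lu Pb" and P: "lu P"
    and H1: "rows_eq n (imult Pa (Emat \<iota>)) (imult (Emat \<iota>2) P)"
    and H2: "rows_eq n (imult Pb (Emat \<iota>)) (imult (Emat \<iota>1) P)"
    and nz: "\<forall>t<n. \<iota>2 t \<noteq> 0"
  shows "(\<forall>t<n. \<iota>2 t = \<iota>1 t) \<and> rows_eq n Pa Pb"
proof -
  define G where "G = linv Pa"
  have G: "lu G" unfolding G_def by (rule linv_lu)
  have GPa: "imult G Pa = iId" unfolding G_def by (rule linv_left[OF Pa])
  have lG: "lowb 0 G" by (rule lu_lowb[OF G])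
  have lPa: "lowb 0 Pa" by (rule lu_lowb[OF Pa])
  have lPb: "lowb 0 Pb" by (rule lu_lowb[OF Pb])
  have lP: "lowb 0 P" by (rule lu_lowb[OF P])
  have lE: "lowb 1 (Emat \<iota>2)" by (rule lowb_Emat)
  define L where "L = imult Pb G"
  have L: "lu L" unfolding L_def by (rule lu_imult[OF Pb G])
  have lL: "lowb 0 L" by (rule lu_lowb[OF L])
  have S1: "rows_eq n (imult G (imult Pa (Emat \<iota>))) (imult G (imult (Emat \<iota>2) P))"
    by (rule rows_eq_imult[OF lG lG rows_eq_refl]) (use H1 in simp)
  have e1: "imult G (imult Pa (Emat \<iota>)) = Emat \<iota>"
    using imult_assoc[OF lG lPa, of "Emat \<iota>"] GPa imult_iId_left by simp
  have e2: "imult G (imult (Emat \<iota>2) P) = imult (imult G (Emat \<iota>2)) P"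
    using imult_assoc[OF lG lE, of P] by simp
  have S2: "rows_eq n (imult Pb (Emat \<iota>)) (imult Pb (imult (imult G (Emat \<iota>2)) P))"
    by (rule rows_eq_imult[OF lPb lPb rows_eq_refl]) (use S1 e1 e2 in simp)
  have lGE: "lowb (0+1) (imult G (Emat \<iota>2))" by (rule lowb_imult[OF lG lE])
  have e3: "imult Pb (imult (imult G (Emat \<iota>2)) P) = imult (imult L (Emat \<iota>2)) P"
    unfolding L_def using imult_assoc[OF lPb lGE, of P] imult_assoc[OF lPb lG, of "Emat \<iota>2"] by simp
  have S3: "rows_eq n (imult (imult L (Emat \<iota>2)) P) (imult (Emat \<iota>1) P)"
    using rows_eq_trans[OF rows_eq_sym[OF S2] H2] e3 by simp
  have lLE: "lowb 1 (imult L (Emat \<iota>2))" using lowb_imult[OF lL lE] by simp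
  have S4: "rows_eq n (imult L (Emat \<iota>2)) (Emat \<iota>1)"
    by (rule lu_right_cancel[OF lLE lowb_Emat P S3])
  have finL: "finite {k. L i k \<noteq> 0}" for i by (rule lowb_finite[OF lL])
  have row: "L i j * \<iota>2 j + (if 0 < j then L i (j - 1) else 0) = Emat \<iota>1 i j" if "i < n" for i j
  proof -
    have "imult L (Emat \<iota>2) i j = Emat \<iota>1 i j" using S4 that unfolding rows_eq_def by blast
    then show ?thesis unfolding imult_Emat_right[OF finL] .
  qed
  have Lz: "\<forall>j<i. L i j = 0" if i: "i < n" for i
  proof (intro allI impI)
    fix j assume "j < i"
    then show "L i j = 0"
    proof (induction j)
      case 0
      then have "L i 0 * \<iota>2 0 = 0" using row[OF i, of 0] by (simp add: Emat_def)
      then show ?case using nz i 0 by auto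
    next
      case (Suc j)
      then have "L i (Suc j) * \<iota>2 (Suc j) = 0" using row[OF i, of "Suc j"] by (simp add: Emat_def)
      then show ?case using nz i Suc by auto
    qed
  qed
  have c1: "\<forall>t<n. \<iota>2 t = \<iota>1 t"
  proof (intro allI impI)
    fix t assume t: "t < n"
    have "L t t * \<iota>2 t + (if 0 < t then L t (t - 1) else 0) = \<iota>1 t"
      using row[OF t, of t] by (simp add: Emat_def)
    then show "\<iota>2 t = \<iota>1 t" using L Lz[OF t] by (auto simp: lu_def split: if_splits)
  qed
  have LI: "rows_eq n L iId"
    unfolding rows_eq_def
  proof (intro allI impI)
    fix i j assume i: "i < n"
    show "L i j = iId i j"
      using L Lz[OF i] by (cases i j rule: linorder_cases) (auto simp: lu_def iId_def)
  qed
  have S5: "rows_eq n (imult L Pa) (imult iId Pa)"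
    by (rule rows_eq_imult[OF lL lu_lowb[OF iId_lu] LI]) (simp add: rows_eq_refl)
  have "imult L Pa = Pb" unfolding L_def using imult_assoc[OF lPb lG, of Pa] GPa imult_iId_right[OF lPb] by simp
  then show ?thesis using S5 c1 imult_iId_left by (simp add: rows_eq_sym)
qed



fun Jr :: "(nat \<Rightarrow> nat \<Rightarrow> real) \<Rightarrow> (nat \<Rightarrow> real) \<Rightarrow> nat \<Rightarrow> nat \<Rightarrow> real" where
  "Jr u \<iota> 0 t = \<iota> t"
| "Jr u \<iota> (Suc m) t = (if t < m then Jr u \<iota> m t else if t = m then Jr u \<iota> m m + u (Suc m) 0
     else (Jr u \<iota> m t + u (Suc m) (t - m)) * Jr u \<iota> m (t - 1)
            * inverse (Jr u \<iota> m (t - 1) + u (Suc m) (t - m - 1)))"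

fun Vr :: "(nat \<Rightarrow> nat \<Rightarrow> real) \<Rightarrow> (nat \<Rightarrow> real) \<Rightarrow> nat \<Rightarrow> nat \<Rightarrow> real" where
  "Vr u \<iota> 0 t = 1"
| "Vr u \<iota> (Suc m) t = (Jr u \<iota> m (m + t + 1) + u (Suc m) (t + 1)) * u (Suc m) t
     * inverse (Jr u \<iota> m (m + t) + u (Suc m) t)"

lemma Jr_pos:
  assumes "\<forall>k\<in>{1..m}. \<forall>t<n. u k t > 0" "\<forall>t<n. \<iota> t > 0" "t < n"
  shows "Jr u \<iota> m t > 0"
  using assms
proof (induction m arbitrary: t)
  case 0 then show ?case by simp
next
  case (Suc m)
  have IH: "\<And>t. t < n \<Longrightarrow> Jr u \<iota> m t > 0" using Suc.IH Suc.prems by auto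
  have U: "\<And>t. t < n \<Longrightarrow> u (Suc m) t > 0" using Suc.prems by auto
  show ?case
    using IH[of t] IH[of "t - 1"] U[of 0] U[of "t - m"] U[of "t - m - 1"] Suc.prems(3)
    by (auto intro!: mult_pos_pos add_pos_pos)
qed

lemma exist_real:
  assumes "\<forall>k\<in>{1..m}. \<forall>t<n. u k t > 0" "\<forall>t<n. \<iota> t > 0"
  shows "rows_eq n (imult (prodF (Vr u \<iota>) m) (Emat \<iota>)) (imult (Emat (Jr u \<iota> m)) (prodF u m))"
  using assms
proof (induction m)
  case 0
  show ?case using imult_iId_left imult_iId_right[OF lowb_Emat] by (simp add: rows_eq_refl)
next
  case (Suc m)
  let ?V = "Vr u \<iota>"
  let ?J = "Jr u \<iota> m"
  let ?J' = "Jr u \<iota> (Suc m)"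
  let ?P = "prodF u m"
  let ?X = "imult (prodF ?V m) (Emat \<iota>)"
  let ?w = "u (Suc m)"
  have IH: "rows_eq n ?X (imult (Emat ?J) ?P)" using Suc.IH Suc.prems by auto
  have X: "?X i j = ?J i * ?P i j + ?P (Suc i) j" if "i < n" for i j
    using IH that imult_Emat_left unfolding rows_eq_def by metis
  show ?case unfolding rows_eq_def
  proof (intro allI impI)
    fix i j assume i: "i < n"
    have lF: "lowb 0 (Fkmat (Suc m) (?V (Suc m)))" by (rule lu_lowb[OF lu_Fk])
    have lP: "lowb 0 (prodF ?V m)" by (rule lu_lowb[OF prodF_lu])
    have L: "imult (prodF ?V (Suc m)) (Emat \<iota>) i j
        = ?X i j - (if Suc m \<le> i then ?V (Suc m) (i - Suc m) * ?X (i - 1) j else 0)"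
      using imult_assoc[OF lF lP, of "Emat \<iota>"] imult_Fk_left by simp
    have R: "imult (Emat ?J') (prodF u (Suc m)) i j
        = ?J' i * (?P i j - (if Suc m \<le> i then ?w (i - Suc m) * ?P (i - 1) j else 0))
          + (?P (Suc i) j - (if m \<le> i then ?w (i - m) * ?P i j else 0))"
      unfolding imult_Emat_left prodF_rec by simp
    show "imult (prodF ?V (Suc m)) (Emat \<iota>) i j = imult (Emat ?J') (prodF u (Suc m)) i j"
    proof (cases i m rule: linorder_cases)
      case less
      then show ?thesis unfolding L R using X[OF i] by simp
    next
      case equal
      then show ?thesis unfolding L R using X[OF i] by (simp add: algebra_simps)
    next
      case greater
      have i1: "i - 1 < n" "Suc (i - 1) = i" using i greater by auto
      have pm: "\<forall>k\<in>{1..m}. \<forall>t<n. u k t > 0" using Suc.prems(1) by auto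
      have pos: "\<forall>t<n. ?J t > 0" using Jr_pos[OF pm Suc.prems(2)] by auto
      have wpos: "\<forall>t<n. ?w t > 0" using Suc.prems by auto
      define D where "D = ?J (i - 1) + ?w (i - Suc m)"
      define A where "A = ?J i + ?w (i - m)"
      have Dpos: "D > 0" unfolding D_def using pos wpos i1 i by (auto intro!: add_pos_pos)
      have J': "?J' i = A * ?J (i - 1) * inverse D"
        unfolding A_def D_def using greater by simp
      have idx: "m + (i - Suc m) + 1 = i" "i - Suc m + 1 = i - m" "m + (i - Suc m) = i - 1" "i - 1 + 1 = i"
        using greater by auto
      have c: "?V (Suc m) (i - Suc m) = A * ?w (i - Suc m) * inverse D"
        unfolding A_def D_def by (simp only: Vr.simps idx)
      have k1: "?J i - ?V (Suc m) (i - Suc m) = ?J' i - ?w (i - m)"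
        unfolding J' c using Dpos unfolding A_def D_def by (simp add: field_simps)
      have k2: "?V (Suc m) (i - Suc m) * ?J (i - 1) = ?J' i * ?w (i - Suc m)"
        unfolding J' c by simp
      have "imult (prodF ?V (Suc m)) (Emat \<iota>) i j
          = (?J i - ?V (Suc m) (i - Suc m)) * ?P i j + ?P (Suc i) j
            - (?V (Suc m) (i - Suc m) * ?J (i - 1)) * ?P (i - 1) j"
        unfolding L using X[OF i] X[OF i1(1)] i1(2) greater by (simp add: algebra_simps)
      also have "\<dots> = (?J' i - ?w (i - m)) * ?P i j + ?P (Suc i) j
            - (?J' i * ?w (i - Suc m)) * ?P (i - 1) j" unfolding k1 k2 ..
      also have "\<dots> = imult (Emat ?J') (prodF u (Suc m)) i j"
        unfolding R using greater by (simp add: algebra_simps)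
      finally show ?thesis .
    qed
  qed
qed



lemma ev_right: "0 < (\<delta>::real) \<Longrightarrow> eventually (\<lambda>e. e \<in> {0<..<\<delta>}) (at_right 0)"
  unfolding eventually_at_right_field by auto

lemma inM_pos_ev: "inM f \<Longrightarrow> eventually (\<lambda>e. f e > 0) (at_right 0)"
  unfolding inM_def
proof (elim exE conjE)
  fix \<delta> :: real assume "0 < \<delta>" "\<forall>e\<in>{0<..<\<delta>}. 0 < f e"
  then show ?thesis using ev_right[of \<delta>] by (auto elim: eventually_mono)
qed

lemma inM_add:
  assumes "inM f" "inM g" shows "inM (\<lambda>e. f e + g e)"
proof -
  obtain d1 L1 where d1: "d1 > 0" "continuous_on {0<..<d1} f" "\<forall>e\<in>{0<..<d1}. 0 < f e"
    "((\<lambda>e. e * ln (f e)) \<longlongrightarrow> L1) (at_right 0)" using assms(1) unfolding inM_def by blast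
  obtain d2 L2 where d2: "d2 > 0" "continuous_on {0<..<d2} g" "\<forall>e\<in>{0<..<d2}. 0 < g e"
    "((\<lambda>e. e * ln (g e)) \<longlongrightarrow> L2) (at_right 0)" using assms(2) unfolding inM_def by blast
  define d where "d = min d1 d2"
  have d: "d > 0" using d1 d2 by (simp add: d_def)
  have sub1: "{0<..<d} \<subseteq> {0<..<d1}" "{0<..<d} \<subseteq> {0<..<d2}" by (auto simp: d_def)
  have cont: "continuous_on {0<..<d} (\<lambda>e. f e + g e)"
    by (intro continuous_on_add continuous_on_subset[OF d1(2) sub1(1)] continuous_on_subset[OF d2(2) sub1(2)])
  have pos: "\<forall>e\<in>{0<..<d}. 0 < f e + g e"
  proof
    fix e assume "e \<in> {0<..<d}"
    then have "f e > 0" "g e > 0" using d1(3) d2(3) sub1 by auto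
    then show "0 < f e + g e" by simp
  qed
  have lo: "max (e * ln (f e)) (e * ln (g e)) \<le> e * ln (f e + g e)" if "e \<in> {0<..<d}" for e
  proof -
    have "f e > 0" "g e > 0" using that d1(3) d2(3) sub1 by auto
    then have "ln (f e) \<le> ln (f e + g e)" "ln (g e) \<le> ln (f e + g e)" by auto
    then show ?thesis using that by (auto intro: mult_left_mono)
  qed
  have hi: "e * ln (f e + g e) \<le> max (e * ln (f e)) (e * ln (g e)) + e * ln 2" if "e \<in> {0<..<d}" for e
  proof -
    have f: "f e > 0" and g: "g e > 0" using that d1(3) d2(3) sub1 by auto
    have "f e + g e \<le> 2 * max (f e) (g e)" by simp
    then have "ln (f e + g e) \<le> ln (2 * max (f e) (g e))" using f g by simp
    also have "\<dots> = ln 2 + max (ln (f e)) (ln (g e))" using f g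
      by (simp add: ln_mult max_def)
    finally have "e * ln (f e + g e) \<le> e * (ln 2 + max (ln (f e)) (ln (g e)))"
      using that by (auto intro: mult_left_mono)
    also have "\<dots> = max (e * ln (f e)) (e * ln (g e)) + e * ln 2"
      using that by (simp add: algebra_simps max_def mult_le_cancel_left_pos)
    finally show ?thesis .
  qed
  have t1: "((\<lambda>e. max (e * ln (f e)) (e * ln (g e))) \<longlongrightarrow> max L1 L2) (at_right 0)"
    by (intro tendsto_max d1(4) d2(4))
  have t2: "((\<lambda>e. max (e * ln (f e)) (e * ln (g e)) + e * ln 2) \<longlongrightarrow> max L1 L2 + 0 * ln 2) (at_right 0)"
    by (intro tendsto_add t1 tendsto_mult tendsto_const) (simp add: tendsto_ident_at)
  have "((\<lambda>e. e * ln (f e + g e)) \<longlongrightarrow> max L1 L2) (at_right 0)"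
    apply (rule tendsto_sandwich[OF _ _ t1])
    using ev_right[OF d] lo hi t2 by (auto elim: eventually_mono)
  then show ?thesis unfolding inM_def using d cont pos by blast
qed

lemma inM_mult:
  assumes "inM f" "inM g" shows "inM (\<lambda>e. f e * g e)"
proof -
  obtain d1 L1 where d1: "d1 > 0" "continuous_on {0<..<d1} f" "\<forall>e\<in>{0<..<d1}. 0 < f e"
    "((\<lambda>e. e * ln (f e)) \<longlongrightarrow> L1) (at_right 0)" using assms(1) unfolding inM_def by blast
  obtain d2 L2 where d2: "d2 > 0" "continuous_on {0<..<d2} g" "\<forall>e\<in>{0<..<d2}. 0 < g e"
    "((\<lambda>e. e * ln (g e)) \<longlongrightarrow> L2) (at_right 0)" using assms(2) unfolding inM_def by blast
  define d where "d = min d1 d2"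
  have d: "d > 0" using d1 d2 by (simp add: d_def)
  have sub1: "{0<..<d} \<subseteq> {0<..<d1}" "{0<..<d} \<subseteq> {0<..<d2}" by (auto simp: d_def)
  have cont: "continuous_on {0<..<d} (\<lambda>e. f e * g e)"
    by (intro continuous_on_mult continuous_on_subset[OF d1(2) sub1(1)] continuous_on_subset[OF d2(2) sub1(2)])
  have pos: "\<forall>e\<in>{0<..<d}. 0 < f e * g e"
  proof
    fix e assume "e \<in> {0<..<d}"
    then have "f e > 0" "g e > 0" using d1(3) d2(3) sub1 by auto
    then show "0 < f e * g e" by simp
  qed
  have eq: "eventually (\<lambda>e. e * ln (f e) + e * ln (g e) = e * ln (f e * g e)) (at_right 0)"
  proof (rule eventually_mono[OF ev_right[OF d]])
    fix e assume "e \<in> {0<..<d}"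
    then have "f e > 0" "g e > 0" using d1(3) d2(3) sub1 by auto
    then show "e * ln (f e) + e * ln (g e) = e * ln (f e * g e)" by (simp add: ln_mult algebra_simps)
  qed
  have "((\<lambda>e. e * ln (f e) + e * ln (g e)) \<longlongrightarrow> L1 + L2) (at_right 0)"
    by (intro tendsto_add d1(4) d2(4))
  then have "((\<lambda>e. e * ln (f e * g e)) \<longlongrightarrow> L1 + L2) (at_right 0)"
    using eq by (rule Lim_transform_eventually)
  then show ?thesis unfolding inM_def using d cont pos by blast
qed

lemma inM_inverse:
  assumes "inM f" shows "inM (\<lambda>e. inverse (f e))"
proof -
  obtain d L where d: "d > 0" "continuous_on {0<..<d} f" "\<forall>e\<in>{0<..<d}. 0 < f e"
    "((\<lambda>e. e * ln (f e)) \<longlongrightarrow> L) (at_right 0)" using assms unfolding inM_def by blast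
  have cont: "continuous_on {0<..<d} (\<lambda>e. inverse (f e))"
    by (rule continuous_on_inverse[OF d(2)]) (use d(3) in force)
  have pos: "\<forall>e\<in>{0<..<d}. 0 < inverse (f e)" using d(3) by auto
  have eq: "eventually (\<lambda>e. - (e * ln (f e)) = e * ln (inverse (f e))) (at_right 0)"
    using ev_right[OF d(1)] by (rule eventually_mono) (use d(3) in \<open>auto simp: ln_inverse\<close>)
  have "((\<lambda>e. - (e * ln (f e))) \<longlongrightarrow> - L) (at_right 0)"
    by (intro tendsto_minus d(4))
  then have "((\<lambda>e. e * ln (inverse (f e))) \<longlongrightarrow> - L) (at_right 0)"
    using eq by (rule Lim_transform_eventually)
  then show ?thesis unfolding inM_def using d cont pos by blast
qed

fun eJ :: "nat \<Rightarrow> nat \<Rightarrow> sfexpr" where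
  "eJ 0 t = SVar (IV t)"
| "eJ (Suc m) t = (if t < m then eJ m t else if t = m then SAdd (eJ m m) (SVar (UV (Suc m) 0))
     else SMul (SMul (SAdd (eJ m t) (SVar (UV (Suc m) (t - m)))) (eJ m (t - 1)))
            (SInv (SAdd (eJ m (t - 1)) (SVar (UV (Suc m) (t - m - 1))))))"

fun eV :: "nat \<Rightarrow> nat \<Rightarrow> sfexpr" where
  "eV 0 t = SOne"
| "eV (Suc m) t = SMul (SMul (SAdd (eJ m (m + t + 1)) (SVar (UV (Suc m) (t + 1)))) (SVar (UV (Suc m) t)))
     (SInv (SAdd (eJ m (m + t)) (SVar (UV (Suc m) t))))"

lemma eJ_eval: "sf_eval (inp U I) (eJ m t) e = Jr (\<lambda>k i. U k i e) (\<lambda>i. I i e) m t"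
  by (induction m arbitrary: t) (auto simp: inp_def)

lemma eV_eval: "sf_eval (inp U I) (eV m t) e = Vr (\<lambda>k i. U k i e) (\<lambda>i. I i e) m t"
  by (cases m) (auto simp: inp_def eJ_eval)

lemma inp_UV [simp]: "inp U I (UV k i) = U k i" and inp_IV [simp]: "inp U I (IV i) = I i"
  by (simp_all add: inp_def)

lemma eJ_inM:
  assumes "\<forall>k\<in>{1..m}. \<forall>i. inM (U k i)" "\<forall>i. inM (I i)"
  shows "inM (sf_eval (inp U I) (eJ m t))"
  using assms
proof (induction m arbitrary: t)
  case 0 then show ?case by simp
next
  case (Suc m)
  have IH: "\<And>t. inM (sf_eval (inp U I) (eJ m t))" using Suc.IH Suc.prems by auto
  have U: "\<And>i. inM (U (Suc m) i)" using Suc.prems by auto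
  show ?case
    using IH U by (auto intro!: inM_add inM_mult inM_inverse)
qed

lemma eV_inM:
  assumes "\<forall>k\<in>{1..Suc m}. \<forall>i. inM (U k i)" "\<forall>i. inM (I i)"
  shows "inM (sf_eval (inp U I) (eV (Suc m) t))"
proof -
  have IH: "\<And>t. inM (sf_eval (inp U I) (eJ m t))" using eJ_inM assms by auto
  have U: "\<And>i. inM (U (Suc m) i)" using assms by auto
  show ?thesis
    using IH U by (auto intro!: inM_add inM_mult inM_inverse)
qed



lemma uniq_real:
  assumes up: "\<forall>k\<in>{1..m}. \<forall>t<n. u k t > 0" and ip: "\<forall>t<n. \<iota> t > 0"
    and an: "\<forall>k\<in>{1..m}. \<forall>t<n. a k t \<noteq> 0" and i2: "\<forall>t<n. jj t \<noteq> 0"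
    and H1: "rows_eq n (imult (prodF a m) (Emat \<iota>)) (imult (Emat jj) (prodF u m))"
  shows "(\<forall>t<n. jj t = Jr u \<iota> m t) \<and> (\<forall>k t. k \<in> {1..m} \<and> t + k < n \<longrightarrow> a k t = Vr u \<iota> k t)"
proof -
  have H2: "rows_eq n (imult (prodF (Vr u \<iota>) m) (Emat \<iota>)) (imult (Emat (Jr u \<iota> m)) (prodF u m))"
    by (rule exist_real[OF up ip])
  have r: "(\<forall>t<n. jj t = Jr u \<iota> m t) \<and> rows_eq n (prodF a m) (prodF (Vr u \<iota>) m)"
    by (rule lu_uniq[OF prodF_lu prodF_lu prodF_lu H1 H2 i2])
  have "\<forall>k t. k \<in> {1..m} \<and> t + k < n \<longrightarrow> a k t = Vr u \<iota> k t"
    by (rule fact_uniq) (use r an in auto)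
  with r show ?thesis by blast
qed

lemma ev_pos_U:
  fixes U :: "nat \<Rightarrow> nat \<Rightarrow> real \<Rightarrow> real" and n :: nat
  assumes "\<forall>k\<in>{1..M}. \<forall>i. inM (U k i)"
  shows "eventually (\<lambda>e. \<forall>k\<in>{1..M}. \<forall>t<n. U k t e > 0) (at_right 0)"
proof -
  have "eventually (\<lambda>e. \<forall>p\<in>{1..M} \<times> {..<n}. U (fst p) (snd p) e > 0) (at_right 0)"
    by (rule eventually_ball_finite) (use assms inM_pos_ev in auto)
  then show ?thesis by (rule eventually_mono) auto
qed

lemma ev_pos_I:
  fixes I :: "nat \<Rightarrow> real \<Rightarrow> real" and n :: nat
  assumes "\<forall>i. inM (I i)"
  shows "eventually (\<lambda>e. \<forall>t<n. I t e > 0) (at_right 0)"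
proof -
  have "eventually (\<lambda>e. \<forall>t\<in>{..<n}. I t e > 0) (at_right 0)"
    by (rule eventually_ball_finite) (use assms inM_pos_ev in auto)
  then show ?thesis by (rule eventually_mono) auto
qed

lemma ev_rows:
  assumes "rel_eq N U I U'' I''"
  shows "eventually (\<lambda>e. rows_eq n
     (imult (prodF (\<lambda>k m. U'' k m e) (Suc N)) (Emat (\<lambda>m. I m e)))
     (imult (Emat (\<lambda>m. I'' m e)) (prodF (\<lambda>k m. U k m e) (Suc N)))) (at_right 0)"
proof -
  have "eventually (\<lambda>e. \<forall>p\<in>{..<n} \<times> {..n}.
      imult (prodF (\<lambda>k m. U'' k m e) (Suc N)) (Emat (\<lambda>m. I m e)) (fst p) (snd p)
    = imult (Emat (\<lambda>m. I'' m e)) (prodF (\<lambda>k m. U k m e) (Suc N)) (fst p) (snd p)) (at_right 0)"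
    by (rule eventually_ball_finite) (use assms in \<open>auto simp: rel_eq_def\<close>)
  then show ?thesis
  proof (rule eventually_mono)
    fix e
    let ?A = "imult (prodF (\<lambda>k m. U'' k m e) (Suc N)) (Emat (\<lambda>m. I m e))"
    let ?B = "imult (Emat (\<lambda>m. I'' m e)) (prodF (\<lambda>k m. U k m e) (Suc N))"
    assume h: "\<forall>p\<in>{..<n} \<times> {..n}. ?A (fst p) (snd p) = ?B (fst p) (snd p)"
    have lA: "lowb (0 + 1) ?A" by (rule lowb_imult[OF lu_lowb[OF prodF_lu] lowb_Emat])
    have lB: "lowb (1 + 0) ?B" by (rule lowb_imult[OF lowb_Emat lu_lowb[OF prodF_lu]])
    show "rows_eq n ?A ?B" unfolding rows_eq_def
    proof (intro allI impI)
      fix i j assume i: "i < n"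
      show "?A i j = ?B i j"
      proof (cases "j \<le> n")
        case True then show ?thesis using h i by auto
      next
        case False
        then have "?A i j = 0" "?B i j = 0" using lA lB i unfolding lowb_def by force+
        then show ?thesis by simp
      qed
    qed
  qed
qed

theorem proposition3p6:
  fixes N :: nat
  shows "\<exists>eU :: nat \<Rightarrow> nat \<Rightarrow> sfexpr. \<exists>eI :: nat \<Rightarrow> sfexpr.
    \<forall>U :: nat \<Rightarrow> nat \<Rightarrow> real \<Rightarrow> real. \<forall>I :: nat \<Rightarrow> real \<Rightarrow> real.
      (\<forall>k\<in>{1..Suc N}. \<forall>i. inM (U k i)) \<and> (\<forall>i. inM (I i)) \<longrightarrow>
      (let U' = (\<lambda>k i. sf_eval (inp U I) (eU k i));
           I' = (\<lambda>i. sf_eval (inp U I) (eI i))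
       in (\<forall>k\<in>{1..Suc N}. \<forall>i. inM (U' k i)) \<and> (\<forall>i. inM (I' i))
          \<and> rel_eq N U I U' I'
          \<and> (\<forall>U'' I''. (\<forall>k\<in>{1..Suc N}. \<forall>i. inM (U'' k i)) \<and> (\<forall>i. inM (I'' i))
                  \<and> rel_eq N U I U'' I'' \<longrightarrow>
                (\<forall>k\<in>{1..Suc N}. \<forall>i. germ_eq (U'' k i) (U' k i))
                \<and> (\<forall>i. germ_eq (I'' i) (I' i))))"
proof (intro exI allI impI)
  fix U :: "nat \<Rightarrow> nat \<Rightarrow> real \<Rightarrow> real" and I :: "nat \<Rightarrow> real \<Rightarrow> real"
  assume hyp: "(\<forall>k\<in>{1..Suc N}. \<forall>i. inM (U k i)) \<and> (\<forall>i. inM (I i))"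
  then have hU: "\<forall>k\<in>{1..Suc N}. \<forall>i. inM (U k i)" and hI: "\<forall>i. inM (I i)" by auto
  define U' where "U' = (\<lambda>k i. sf_eval (inp U I) (eV k i))"
  define I' where "I' = (\<lambda>i. sf_eval (inp U I) (eJ (Suc N) i))"
  have U'e: "(\<lambda>k m. U' k m e) = Vr (\<lambda>k i. U k i e) (\<lambda>i. I i e)" for e
    unfolding U'_def by (intro ext) (simp add: eV_eval)
  have I'e: "(\<lambda>m. I' m e) = Jr (\<lambda>k i. U k i e) (\<lambda>i. I i e) (Suc N)" for e
    unfolding I'_def by (intro ext) (simp add: eJ_eval)
  have c1: "\<forall>k\<in>{1..Suc N}. \<forall>i. inM (U' k i)"
  proof (intro ballI allI)
    fix k i assume k: "k \<in> {1..Suc N}"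
    then obtain m where m: "k = Suc m" by (cases k) auto
    have "\<forall>k\<in>{1..Suc m}. \<forall>i. inM (U k i)" using hU k m by auto
    then show "inM (U' k i)" unfolding U'_def m by (rule eV_inM[OF _ hI])
  qed
  have c2: "\<forall>i. inM (I' i)" unfolding I'_def using eJ_inM[OF hU hI] by blast
  have c3: "rel_eq N U I U' I'"
    unfolding rel_eq_def
  proof (intro allI)
    fix i j
    have "eventually (\<lambda>e. (\<forall>k\<in>{1..Suc N}. \<forall>t<Suc i. U k t e > 0) \<and> (\<forall>t<Suc i. I t e > 0)) (at_right 0)"
      using ev_pos_U[OF hU] ev_pos_I[OF hI] by (rule eventually_conj)
    then show "\<forall>\<^sub>F e in at_right 0.
        imult (prodF (\<lambda>k m. U' k m e) (Suc N)) (Emat (\<lambda>m. I m e)) i j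
      = imult (Emat (\<lambda>m. I' m e)) (prodF (\<lambda>k m. U k m e) (Suc N)) i j"
    proof (rule eventually_mono)
      fix e assume "(\<forall>k\<in>{1..Suc N}. \<forall>t<Suc i. U k t e > 0) \<and> (\<forall>t<Suc i. I t e > 0)"
      then have "rows_eq (Suc i) (imult (prodF (Vr (\<lambda>k i. U k i e) (\<lambda>i. I i e)) (Suc N)) (Emat (\<lambda>i. I i e)))
          (imult (Emat (Jr (\<lambda>k i. U k i e) (\<lambda>i. I i e) (Suc N))) (prodF (\<lambda>k i. U k i e) (Suc N)))"
        by (intro exist_real) auto
      then show "imult (prodF (\<lambda>k m. U' k m e) (Suc N)) (Emat (\<lambda>m. I m e)) i j
      = imult (Emat (\<lambda>m. I' m e)) (prodF (\<lambda>k m. U k m e) (Suc N)) i j"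
        unfolding U'e I'e rows_eq_def by simp
    qed
  qed
  have c4: "(\<forall>k\<in>{1..Suc N}. \<forall>i. germ_eq (U'' k i) (U' k i)) \<and> (\<forall>i. germ_eq (I'' i) (I' i))"
    if h: "(\<forall>k\<in>{1..Suc N}. \<forall>i. inM (U'' k i)) \<and> (\<forall>i. inM (I'' i)) \<and> rel_eq N U I U'' I''" for U'' I''
  proof -
    have key: "eventually (\<lambda>e. (\<forall>t<n. I'' t e = I' t e) \<and>
        (\<forall>k t. k \<in> {1..Suc N} \<and> t + k < n \<longrightarrow> U'' k t e = U' k t e)) (at_right 0)" for n
    proof -
      have ev: "eventually (\<lambda>e. ((\<forall>k\<in>{1..Suc N}. \<forall>t<n. U k t e > 0) \<and> (\<forall>t<n. I t e > 0))
          \<and> ((\<forall>k\<in>{1..Suc N}. \<forall>t<n. U'' k t e > 0) \<and> (\<forall>t<n. I'' t e > 0))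
          \<and> rows_eq n
     (imult (prodF (\<lambda>k m. U'' k m e) (Suc N)) (Emat (\<lambda>m. I m e)))
     (imult (Emat (\<lambda>m. I'' m e)) (prodF (\<lambda>k m. U k m e) (Suc N)))) (at_right 0)"
        using h by (intro eventually_conj ev_pos_U ev_pos_I ev_rows hU hI) auto
      show ?thesis
      proof (rule eventually_mono[OF ev])
        fix e
        assume a: "((\<forall>k\<in>{1..Suc N}. \<forall>t<n. U k t e > 0) \<and> (\<forall>t<n. I t e > 0))
          \<and> ((\<forall>k\<in>{1..Suc N}. \<forall>t<n. U'' k t e > 0) \<and> (\<forall>t<n. I'' t e > 0))
          \<and> rows_eq n
     (imult (prodF (\<lambda>k m. U'' k m e) (Suc N)) (Emat (\<lambda>m. I m e)))
     (imult (Emat (\<lambda>m. I'' m e)) (prodF (\<lambda>k m. U k m e) (Suc N)))"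
        have r: "(\<forall>t<n. I'' t e = Jr (\<lambda>k i. U k i e) (\<lambda>i. I i e) (Suc N) t) \<and>
          (\<forall>k t. k \<in> {1..Suc N} \<and> t + k < n \<longrightarrow> U'' k t e = Vr (\<lambda>k i. U k i e) (\<lambda>i. I i e) k t)"
        proof (rule uniq_real[where a="\<lambda>k m. U'' k m e" and jj="\<lambda>m. I'' m e"])
          show "\<forall>k\<in>{1..Suc N}. \<forall>t<n. U'' k t e \<noteq> 0"
          proof (intro ballI allI impI)
            fix k t assume "k \<in> {1..Suc N}" "t < n"
            then have "U'' k t e > 0" using a by blast
            then show "U'' k t e \<noteq> 0" by simp
          qed
        qed (use a in auto)
        show "(\<forall>t<n. I'' t e = I' t e) \<and>
          (\<forall>k t. k \<in> {1..Suc N} \<and> t + k < n \<longrightarrow> U'' k t e = U' k t e)"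
          using r fun_cong[OF U'e[of e]] fun_cong[OF I'e[of e]] by (metis)
      qed
    qed
    show ?thesis unfolding germ_eq_def
    proof (intro conjI ballI allI)
      fix k i assume k: "k \<in> {1..Suc N}"
      show "\<forall>\<^sub>F e in at_right 0. U'' k i e = U' k i e"
        using key[of "i + k + 1"] by (rule eventually_mono) (use k in auto)
    next
      fix i
      show "\<forall>\<^sub>F e in at_right 0. I'' i e = I' i e"
        using key[of "Suc i"] by (rule eventually_mono) auto
    qed
  qed
  show "let U' = (\<lambda>k i. sf_eval (inp U I) (eV k i));
           I' = (\<lambda>i. sf_eval (inp U I) (eJ (Suc N) i))
       in (\<forall>k\<in>{1..Suc N}. \<forall>i. inM (U' k i)) \<and> (\<forall>i. inM (I' i))
          \<and> rel_eq N U I U' I'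
          \<and> (\<forall>U'' I''. (\<forall>k\<in>{1..Suc N}. \<forall>i. inM (U'' k i)) \<and> (\<forall>i. inM (I'' i))
                  \<and> rel_eq N U I U'' I'' \<longrightarrow>
                (\<forall>k\<in>{1..Suc N}. \<forall>i. germ_eq (U'' k i) (U' k i))
                \<and> (\<forall>i. germ_eq (I'' i) (I' i)))"
    unfolding Let_def U'_def[symmetric] I'_def[symmetric] using c1 c2 c3 c4 by blast
qed

end
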